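(* Let $n>2k-t$, $q\geq 3$ and $k>2t+2$. Then \[\theta_{k+1}-\theta_{k-t}+\left[{n-t\atop k-t}\right]_q-q^{(k-t+1)(k-t)}\left[{n-k-1\atop k-t}\right]_q>\left[{n-t-2\atop k-t-2}\right]_q\left(1+\theta_{t+2}q^{k-t-1}\frac{q^{n-k}-1}{q^{k-t-1}-1}\right),\] i.e. the set of all $k$-spaces of $\mathrm{PG}(n,q)$ in $\langle\pi,\delta\rangle$ together with all $k$-spaces through $\delta$ meeting $\langle\pi,\delta\rangle$ in at least a $(t+1)$-space (for a $t$-space $\delta$ and $k$-space $\pi$ with $\dim(\pi\cap\delta)=t-1$) is larger than the set of all $k$-spaces meeting a fixed $(t+2)$-space in at least a $(t+1)$-space.
   Context: $\left[{n\atop k}\right]_q=\frac{(q^n-1)\cdots(q^{n-k+1}-1)}{(q^k-1)\cdots(q-1)}$ for $k>0$, $=1$ for $k=0$; $\theta_m=\frac{q^{m+1}-1}{q-1}$; $q$ is a prime power; dimensions are projective. *)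

theory Defs
  imports Complex_Main "HOL-Computational_Algebra.Primes"
begin

definition gauss_binom :: "nat \<Rightarrow> nat \<Rightarrow> nat \<Rightarrow> real" where
  "gauss_binom q n k =
     (if k = 0 then 1
      else (\<Prod>i<k. real q ^ (n - i) - 1) / (\<Prod>i<k. real q ^ (i + 1) - 1))"

text \<open>theta_m = (q^(m+1) - 1)/(q - 1), number of points of PG(m,q).\<close>
definition theta :: "nat \<Rightarrow> nat \<Rightarrow> real" where
  "theta q m = (real q ^ (m + 1) - 1) / (real q - 1)"

definition prime_power :: "nat \<Rightarrow> bool" where
  "prime_power q \<longleftrightarrow> (\<exists>p e. prime p \<and> e \<ge> 1 \<and> q = p ^ e)"

end

theory Submission
  imports Defs
begin

lemma gb_eq: "gauss_binom q a b = (\<Prod>i<b. real q ^ (a - i) - 1) / (\<Prod>i<b. real q ^ (i + 1) - 1)"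
  by (simp add: gauss_binom_def)

lemma rev_prod: "(\<Prod>i<(b::nat). f (b - i)) = (\<Prod>i<b. (f (i + 1) :: real))"
proof -
  have "(\<Prod>i<b. f (b - i)) = (\<Prod>i<b. (\<lambda>j. f (j+1)) (b - Suc i))"
    by (intro prod.cong refl arg_cong[where f=f]) auto
  also have "\<dots> = (\<Prod>i<b. f (i + 1))" by (rule prod.nat_diff_reindex)
  finally show ?thesis .
qed

lemma den_pos: assumes "q \<ge> 2" shows "0 < (\<Prod>i<b. real q ^ (i + 1) - 1)"
proof (rule prod_pos)
  fix i assume "i \<in> {..<b}"
  have "real q ^ 1 \<le> real q ^ (i+1)" using assms by (intro power_increasing) auto
  then have "real q \<le> real q ^ (i+1)" by simp
  moreover have "(2::real) \<le> real q" using assms by simp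
  ultimately show "0 < real q ^ (i + 1) - 1" by linarith
qed

lemma gb_lower: assumes "q \<ge> 2" "b \<le> a" shows "real q ^ (b * (a - b)) \<le> gauss_binom q a b"
proof -
  let ?Q = "real q"
  have D: "(\<Prod>i<b. ?Q ^ (i + 1) - 1) = (\<Prod>i<b. ?Q ^ (b - i) - 1)"
    using rev_prod[of "\<lambda>j. ?Q ^ j - 1" b] by simp
  have "(\<Prod>i<b. ?Q ^ (a - b) * (?Q ^ (b - i) - 1)) \<le> (\<Prod>i<b. ?Q ^ (a - i) - 1)"
  proof (rule prod_mono)
    fix i assume i: "i \<in> {..<b}"
    have "?Q ^ (b - i) \<ge> 1" using assms by simp
    moreover have "?Q ^ (a - b) * ?Q ^ (b - i) = ?Q ^ (a - i)"
      using i assms by (simp add: power_add[symmetric])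
    moreover have "?Q ^ (a - b) \<ge> 1" using assms by simp
    moreover have "?Q ^ (a - b) \<le> ?Q ^ (a - i)" using assms i by (intro power_increasing) auto
    ultimately show "0 \<le> ?Q ^ (a - b) * (?Q ^ (b - i) - 1) \<and> ?Q ^ (a - b) * (?Q ^ (b - i) - 1) \<le> ?Q ^ (a - i) - 1"
      by (simp add: algebra_simps)
  qed
  also have "(\<Prod>i<b. ?Q ^ (a - b) * (?Q ^ (b - i) - 1)) = ?Q ^ ((a - b) * b) * (\<Prod>i<b. ?Q ^ (i + 1) - 1)"
    by (simp only: prod.distrib prod_constant D power_mult card_lessThan)
  finally show ?thesis using den_pos[OF assms(1), of b]
    by (simp add: gb_eq le_divide_eq mult.commute)
qed

lemma S_bound: assumes "q \<ge> 3"
  shows "(real q ^ b + 1) * (\<Prod>i<b. real q ^ (i + 1)) \<le> 2 * real q ^ b * (\<Prod>i<b. real q ^ (i + 1) - 1)"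
proof (induction b)
  case 0 then show ?case by simp
next
  case (Suc b)
  let ?Q = "real q"
  let ?P = "(\<Prod>i<b. ?Q ^ (i + 1) - 1)" and ?S = "(\<Prod>i<b. ?Q ^ (i + 1))"
  have Qb: "?Q ^ b \<ge> 1" using assms by simp
  have key: "(?Q ^ (b+1) + 1) * ?Q ^ b \<le> (?Q ^ b + 1) * (?Q ^ (b+1) - 1)"
  proof -
    have "?Q ^ b * (?Q - 2) \<ge> 1" using Qb assms
    proof -
      have h: "?Q - 2 \<ge> 1" using assms by simp
      have "1*1 \<le> ?Q^b*(?Q-2)" by (rule mult_mono) (use Qb h in auto)
      then show ?thesis by simp
    qed
    then show ?thesis by (simp add: algebra_simps)
  qed
  have S0: "?S \<ge> 0" by (intro prod_nonneg) simp
  have "(?Q ^ Suc b + 1) * (?S * ?Q ^ Suc b) * ?Q ^ b = ((?Q ^ (b+1) + 1) * ?Q ^ b) * (?S * ?Q ^ Suc b)"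
    by simp
  also have "\<dots> \<le> ((?Q ^ b + 1) * (?Q ^ (b+1) - 1)) * (?S * ?Q ^ Suc b)"
    using key S0 by (intro mult_right_mono) auto
  also have "\<dots> = ((?Q ^ b + 1) * ?S) * ((?Q ^ (b+1) - 1) * ?Q ^ Suc b)" by simp
  also have "\<dots> \<le> (2 * ?Q ^ b * ?P) * ((?Q ^ (b+1) - 1) * ?Q ^ Suc b)"
  proof (rule mult_right_mono)
    show "(?Q ^ b + 1) * ?S \<le> 2 * ?Q ^ b * ?P" using Suc by simp
    have "?Q ^ Suc b \<ge> 1" by (rule one_le_power) (use assms in simp)
    then show "0 \<le> (?Q ^ (b+1) - 1) * ?Q ^ Suc b" by simp
  qed
  finally have "(?Q ^ Suc b + 1) * (?S * ?Q ^ Suc b) * ?Q ^ b \<le> (2 * ?Q ^ Suc b * (?P * (?Q ^ Suc b - 1))) * ?Q ^ b"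
    by (simp add: algebra_simps)
  then have "(?Q ^ Suc b + 1) * (?S * ?Q ^ Suc b) \<le> 2 * ?Q ^ Suc b * (?P * (?Q ^ Suc b - 1))"
    by (rule mult_right_le_imp_le) (use Qb in linarith)
  moreover have e1: "(\<Prod>i<Suc b. ?Q^(i+1)) = ?S * ?Q^(b+1)" by (simp only: prod.lessThan_Suc)
  moreover have e2: "(\<Prod>i<Suc b. ?Q^(i+1) - 1) = ?P * (?Q^(b+1) - 1)" by (simp only: prod.lessThan_Suc)
  ultimately show ?case by (simp only: Suc_eq_plus1)
qed

lemma S_le: assumes "q \<ge> 3"
  shows "(\<Prod>i<b. real q ^ (i + 1)) \<le> 2 * (\<Prod>i<b. real q ^ (i + 1) - 1)"
proof -
  let ?P = "(\<Prod>i<b. real q ^ (i + 1) - 1)" and ?S = "(\<Prod>i<b. real q ^ (i + 1))"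
  have S0: "?S \<ge> 0" by (intro prod_nonneg) simp
  have Qb: "real q ^ b > 0" using assms by simp
  have "real q ^ b * ?S \<le> (real q ^ b + 1) * ?S" using S0 by (simp add: algebra_simps)
  also have "\<dots> \<le> real q ^ b * (2 * ?P)" using S_bound[OF assms, of b] by simp
  finally show ?thesis by (rule mult_left_le_imp_le) (use Qb in simp)
qed

lemma gb_upper: assumes "q \<ge> 3" "b \<le> a" shows "gauss_binom q a b \<le> 2 * real q ^ (b * (a - b))"
proof -
  let ?Q = "real q"
  let ?P = "(\<Prod>i<b. ?Q ^ (i + 1) - 1)" and ?S = "(\<Prod>i<b. ?Q ^ (i + 1))"
  have P0: "?P > 0" using den_pos[of q b] assms by simp
  have "(\<Prod>i<b. ?Q ^ (a - i) - 1) \<le> (\<Prod>i<b. ?Q ^ (a - b) * ?Q ^ (b - i))"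
  proof (rule prod_mono)
    fix i assume i: "i \<in> {..<b}"
    have "?Q ^ (a - b) * ?Q ^ (b - i) = ?Q ^ (a - i)"
      using i assms by (simp add: power_add[symmetric])
    moreover have "?Q ^ (a - i) \<ge> 1" using assms by simp
    ultimately show "0 \<le> ?Q ^ (a - i) - 1 \<and> ?Q ^ (a - i) - 1 \<le> ?Q ^ (a - b) * ?Q ^ (b - i)"
      by simp
  qed
  also have "\<dots> = ?Q ^ ((a - b) * b) * ?S"
    using rev_prod[of "\<lambda>j. ?Q ^ j" b]
    by (simp only: prod.distrib prod_constant power_mult card_lessThan)
  also have "\<dots> \<le> ?Q ^ ((a - b) * b) * (2 * ?P)"
    using S_le[OF assms(1), of b] by (intro mult_left_mono) auto
  finally show ?thesis using P0
    by (simp add: gb_eq divide_le_eq mult.commute mult.left_commute)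
qed

lemma field_aux: fixes P D X Y :: real assumes "D > 0" "X > 1"
  shows "P / D + X * (P * (Y - 1) / (D * (X - 1))) = P * ((X - 1) + (X * Y - X)) / (D * (X - 1))"
  using assms by (simp add: field_simps)

lemma gb_pascal: assumes "q \<ge> 2" "b \<le> a"
  shows "gauss_binom q (Suc a) (Suc b) = gauss_binom q a b + real q ^ Suc b * gauss_binom q a (Suc b)"
proof -
  let ?Q = "real q"
  let ?P = "(\<Prod>i<b. ?Q ^ (a - i) - 1)" and ?D = "(\<Prod>i<b. ?Q ^ (i + 1) - 1)"
  have D0: "?D > 0" using den_pos[OF assms(1)] .
  have Qb: "?Q ^ Suc b > 1"
  proof -
    have "?Q ^ 1 \<le> ?Q ^ Suc b" by (rule power_increasing) (use assms in auto)
    moreover have "?Q \<ge> 2" using assms by simp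
    ultimately show ?thesis by (simp only: power_one_right)
  qed
  have e1: "(\<Prod>i<Suc b. ?Q ^ (Suc a - i) - 1) = (?Q ^ Suc a - 1) * ?P"
    by (simp only: prod.lessThan_Suc_shift) simp
  have e2: "(\<Prod>i<Suc b. ?Q ^ (a - i) - 1) = ?P * (?Q ^ (a - b) - 1)"
    by (simp only: prod.lessThan_Suc)
  have e3: "(\<Prod>i<Suc b. ?Q ^ (i + 1) - 1) = ?D * (?Q ^ Suc b - 1)"
    by (simp only: prod.lessThan_Suc) (simp only: Suc_eq_plus1)
  have e4: "?Q ^ Suc b * ?Q ^ (a - b) = ?Q ^ Suc a"
    using assms by (simp add: power_add[symmetric])
  have "gauss_binom q a b + ?Q ^ Suc b * gauss_binom q a (Suc b)
     = ?P / ?D + ?Q ^ Suc b * (?P * (?Q ^ (a - b) - 1) / (?D * (?Q ^ Suc b - 1)))"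
    by (simp only: gb_eq e2 e3)
  also have "\<dots> = ?P * ((?Q ^ Suc b - 1) + (?Q ^ Suc b * ?Q ^ (a - b) - ?Q ^ Suc b)) / (?D * (?Q ^ Suc b - 1))"
    by (rule field_aux[OF D0 Qb])
  also have "\<dots> = (?Q ^ Suc a - 1) * ?P / (?D * (?Q ^ Suc b - 1))"
    unfolding e4 by (simp add: algebra_simps)
  also have "\<dots> = gauss_binom q (Suc a) (Suc b)"
    by (simp only: gb_eq e1 e3)
  finally show ?thesis by simp
qed

lemma tele_step: assumes "q \<ge> 2" "s + m \<le> N" "m \<ge> 1"
  shows "gauss_binom q N m - real q ^ (Suc s * m) * gauss_binom q (N - Suc s) m
       = (gauss_binom q N m - real q ^ (s * m) * gauss_binom q (N - s) m)
         + real q ^ (s * m) * gauss_binom q (N - s - 1) (m - 1)"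
proof -
  obtain a' where a': "N - s = Suc a'" by (rule that[of "N - s - 1"]) (use assms in arith)
  obtain b' where b': "m = Suc b'" by (rule that[of "m - 1"]) (use assms in arith)
  have e1: "N - Suc s = a'" "N - s - 1 = a'" "m - 1 = b'" using a' b' by auto
  have p: "gauss_binom q (Suc a') (Suc b') = gauss_binom q a' b' + real q ^ Suc b' * gauss_binom q a' (Suc b')"
    using assms a' b' by (intro gb_pascal) auto
  have e2: "real q ^ (Suc s * m) = real q ^ (s * m) * real q ^ m" by (simp add: power_add)
  show ?thesis unfolding e1 e2 a' using p b' by (simp add: algebra_simps)
qed

lemma tele_nonneg: assumes "q \<ge> 2" "m \<ge> 1"
  shows "s + m \<le> N \<Longrightarrow> gauss_binom q N m - real q ^ (s * m) * gauss_binom q (N - s) m \<ge> 0"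
proof (induction s)
  case 0 then show ?case by simp
next
  case (Suc s)
  have "0 \<le> real q ^ (s * m) * gauss_binom q (N - s - 1) (m - 1)"
  proof (rule mult_nonneg_nonneg)
    show "0 \<le> gauss_binom q (N - s - 1) (m - 1)"
    proof -
      have "m - 1 \<le> N - s - 1" using Suc.prems by arith
      from gb_lower[OF assms(1) this] show ?thesis by (rule order.trans[rotated]) simp
    qed
  qed simp
  moreover have "s + m \<le> N" using Suc.prems by simp
  ultimately show ?case using Suc.IH tele_step[OF assms(1) _ assms(2), of s N] by linarith
qed

theorem mainTheorem15:
  fixes n k t q :: nat
  assumes "prime_power q" and "q \<ge> 3"
    and "n > 2 * k - t" and "k > 2 * t + 2"
  shows "theta q (k + 1) - theta q (k - t) + gauss_binom q (n - t) (k - t)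
           - real q ^ ((k - t + 1) * (k - t)) * gauss_binom q (n - k - 1) (k - t)
         > gauss_binom q (n - t - 2) (k - t - 2) *
           (1 + theta q (t + 2) * real q ^ (k - t - 1) *
                ((real q ^ (n - k) - 1) / (real q ^ (k - t - 1) - 1)))"
proof -
  let ?Q = "real q"
  have q2: "q \<ge> 2" using assms by simp
  have Q3: "?Q \<ge> 3" using assms by simp
  define m where "m = k - t"
  define a where "a = n - k"
  define N where "N = n - t"
  have h1: "t + 3 \<le> m" using assms unfolding m_def by arith
  have h2: "m + 1 \<le> a" using assms unfolding m_def a_def by arith
  obtain c d where cd: "m = c + 3" "a = c + 4 + d" "t + 3 \<le> m"
    by (rule that[of "m - 3" "a - m - 1"]) (use h1 h2 in arith)+
  have eN: "N = m + a" using assms unfolding m_def a_def N_def by linarith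
  have goal_idx: "n - t = N" "k - t = m" "n - k - 1 = N - Suc m" "n - t - 2 = N - 2" "k - t - 2 = m - 2"
    "k - t - 1 = m - 1" "n - k = a" "(k - t + 1) * (k - t) = Suc m * m"
    using eN unfolding m_def a_def N_def by auto
  define E where "E = ?Q ^ ((m - 2) * a)"
  define Y where "Y = ?Q ^ a"
  define Z where "Z = ?Q ^ (m - 1)"
  have E0: "E > 0" "Y > 0" using Q3 unfolding E_def Y_def by auto
  have Y81: "Y \<ge> 81"
  proof -
    have "?Q ^ 4 \<le> ?Q ^ a" using Q3 cd by (intro power_increasing) auto
    moreover have "(3::real) ^ 4 \<le> ?Q ^ 4" using Q3 by (intro power_mono) auto
    ultimately show ?thesis unfolding Y_def by simp
  qed
  have Z9: "Z \<ge> 9"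
  proof -
    have "?Q ^ 2 \<le> ?Q ^ (m - 1)" using Q3 cd by (intro power_increasing) auto
    moreover have "(3::real) ^ 2 \<le> ?Q ^ 2" using Q3 by (intro power_mono) auto
    ultimately show ?thesis unfolding Z_def by simp
  qed
  let ?D = "\<lambda>s. gauss_binom q N m - ?Q ^ (s * m) * gauss_binom q (N - s) m"
  have m1: "m \<ge> 1" using cd by simp
  have Dm1: "?D (m - 1) \<ge> 0" using tele_nonneg[OF q2 m1, of "m - 1" N] eN cd by simp
  have st1: "?D (Suc (m - 1)) = ?D (m - 1) + ?Q ^ ((m - 1) * m) * gauss_binom q (N - (m - 1) - 1) (m - 1)"
    using tele_step[OF q2 _ m1, of "m - 1" N] eN cd by simp
  have st2: "?D (Suc m) = ?D m + ?Q ^ (m * m) * gauss_binom q (N - m - 1) (m - 1)"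
    using tele_step[OF q2 _ m1, of m N] eN cd by simp
  have sm: "Suc (m - 1) = m" using cd by simp
  have l1: "?Q ^ ((m - 1) * m) * gauss_binom q (N - (m - 1) - 1) (m - 1) \<ge> E * Y * Z"
  proof -
    have "?Q ^ ((m - 1) * (N - (m - 1) - 1 - (m - 1))) \<le> gauss_binom q (N - (m - 1) - 1) (m - 1)"
      using eN cd by (intro gb_lower[OF q2]) auto
    then have "?Q ^ ((m - 1) * m) * ?Q ^ ((m - 1) * (N - (m - 1) - 1 - (m - 1))) \<le> ?Q ^ ((m - 1) * m) * gauss_binom q (N - (m - 1) - 1) (m - 1)"
      by (intro mult_left_mono) auto
    moreover have "?Q ^ ((m - 1) * m) * ?Q ^ ((m - 1) * (N - (m - 1) - 1 - (m - 1))) = E * Y * Z"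
    proof -
      have "(m - 1) * m + (m - 1) * (N - (m - 1) - 1 - (m - 1)) = (m - 2) * a + a + (m - 1)"
        using eN cd by (simp add: algebra_simps)
      then show ?thesis unfolding E_def Y_def Z_def by (simp add: power_add[symmetric])
    qed
    ultimately show ?thesis by simp
  qed
  have l2: "?Q ^ (m * m) * gauss_binom q (N - m - 1) (m - 1) \<ge> E * Y * Z * ?Q"
  proof -
    have "?Q ^ ((m - 1) * (N - m - 1 - (m - 1))) \<le> gauss_binom q (N - m - 1) (m - 1)"
      using eN cd by (intro gb_lower[OF q2]) auto
    then have "?Q ^ (m * m) * ?Q ^ ((m - 1) * (N - m - 1 - (m - 1))) \<le> ?Q ^ (m * m) * gauss_binom q (N - m - 1) (m - 1)"
      by (intro mult_left_mono) auto
    moreover have "?Q ^ (m * m) * ?Q ^ ((m - 1) * (N - m - 1 - (m - 1))) = E * Y * Z * ?Q"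
    proof -
      have "m * m + (m - 1) * (N - m - 1 - (m - 1)) = (m - 2) * a + a + (m - 1) + 1"
        using eN cd by (simp add: algebra_simps)
      then show ?thesis unfolding E_def Y_def Z_def by (simp add: power_add[symmetric])
    qed
    ultimately show ?thesis by simp
  qed
  have Dlow: "?D (Suc m) \<ge> E * Y * Z + E * Y * Z * ?Q"
    using st1 st2 l1 l2 Dm1 unfolding sm by linarith
  have th_mono: "theta q (k + 1) - theta q (k - t) \<ge> 0"
  proof -
    have "?Q ^ (k - t + 1) \<le> ?Q ^ (k + 1 + 1)" using Q3 by (intro power_increasing) auto
    then show ?thesis unfolding theta_def using Q3 by (intro diff_ge_0_iff_ge[THEN iffD2] divide_right_mono) auto
  qed
  have th2: "theta q m \<le> theta q (Suc k)" using th_mono unfolding m_def by simp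
  have ai: "a - Suc 0 = N - Suc m" using eN by simp
  define G where "G = gauss_binom q (N - 2) (m - 2)"
  have G0: "G \<ge> 0" unfolding G_def
  proof -
    have "m - 2 \<le> N - 2" using eN by arith
    from gb_lower[OF q2 this] show "0 \<le> gauss_binom q (N - 2) (m - 2)" by (rule order.trans[rotated]) simp
  qed
  have G2: "G \<le> 2 * E" unfolding G_def E_def
  proof -
    have "gauss_binom q (N - 2) (m - 2) \<le> 2 * ?Q ^ ((m - 2) * (N - 2 - (m - 2)))"
      using eN cd by (intro gb_upper[OF assms(2)]) auto
    moreover have "N - 2 - (m - 2) = a" using eN cd by simp
    ultimately show "gauss_binom q (N - 2) (m - 2) \<le> 2 * ?Q ^ ((m - 2) * a)" by simp
  qed
  define T where "T = theta q (t + 2)"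
  have T0: "T \<ge> 0"
  proof -
    have "?Q ^ (t + 2 + 1) \<ge> 1" by (rule one_le_power) (use Q3 in simp)
    then show ?thesis unfolding T_def theta_def using Q3 by (intro divide_nonneg_nonneg) auto
  qed
  have T1: "T \<le> 3/2 * Z"
  proof -
    have a1: "?Q ^ (t + 2) \<le> Z" unfolding Z_def using Q3 cd by (intro power_increasing) auto
    have a2: "3 * ?Q ^ (t + 2) \<le> ?Q ^ (t + 3)"
    proof -
      have "3 * ?Q ^ (t + 2) \<le> ?Q * ?Q ^ (t + 2)" using Q3 by (intro mult_right_mono) auto
      moreover have "?Q * ?Q ^ (t + 2) = ?Q ^ (t + 3)" by (simp add: eval_nat_numeral)
      ultimately show ?thesis by simp
    qed
    have "T = (?Q ^ (t + 3) - 1) / (?Q - 1)" unfolding T_def theta_def by (simp add: numeral_3_eq_3)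
    also have "\<dots> \<le> 3/2 * ?Q ^ (t + 2)"
    proof -
      have e: "?Q ^ (t + 3) = ?Q * ?Q ^ (t + 2)" by (simp add: eval_nat_numeral)
      have "?Q * ?Q ^ (t + 2) - 1 \<le> 3/2 * ?Q ^ (t + 2) * (?Q - 1)"
        using a2 unfolding e by (simp add: algebra_simps)
      then show ?thesis unfolding e using Q3 by (simp add: divide_le_eq)
    qed
    finally show ?thesis using a1 by linarith
  qed
  have YZ9: "Y * 9 \<le> Y * Z" using Z9 E0 by (intro mult_left_mono) auto
  have R1: "Z * ((Y - 1) / (Z - 1)) \<le> 9/8 * Y"
  proof -
    have x1: "Z * (Y - 1) = Y * Z - Z" "9/8 * Y * (Z - 1) = 9/8 * (Y * Z) - 9/8 * Y"
      by (simp_all add: right_diff_distrib mult_ac)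
    have "Z * (Y - 1) \<le> 9/8 * Y * (Z - 1)" unfolding x1 using YZ9 Z9 by linarith
    then have "Z * (Y - 1) / (Z - 1) \<le> 9/8 * Y" using Z9 by (simp add: divide_le_eq)
    then show ?thesis by simp
  qed
  define F where "F = 1 + T * Z * ((Y - 1) / (Z - 1))"
  have F0: "F \<ge> 0" unfolding F_def using T0 Z9 E0 Y81 by (intro add_nonneg_nonneg mult_nonneg_nonneg divide_nonneg_nonneg) auto
  have F1: "F \<le> 1 + 27/16 * (Y * Z)"
  proof -
    have "T * (Z * ((Y - 1) / (Z - 1))) \<le> (3/2 * Z) * (9/8 * Y)"
    proof (rule mult_mono)
      show "0 \<le> Z * ((Y - 1) / (Z - 1))" using Z9 Y81 by (intro mult_nonneg_nonneg divide_nonneg_nonneg) auto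
    qed (use T1 R1 Z9 in auto)
    then show ?thesis unfolding F_def by (simp add: algebra_simps)
  qed
  have GF: "G * F \<le> 2 * E * (1 + 27/16 * (Y * Z))"
    using G0 G2 F0 F1 by (intro mult_mono) auto
  have YZ4: "4 \<le> Y * Z" using YZ9 Y81 by linarith
  have YZ: "E * (Y * Z) \<ge> E * 4" using E0 YZ4 by (intro mult_left_mono) auto
  have EYZQ: "E * Y * Z * ?Q \<ge> E * Y * Z * 3" using Q3 E0 Z9 by (intro mult_left_mono) auto
  have fin: "G * F < E * Y * Z + E * Y * Z * ?Q"
  proof -
    have w1: "G * F \<le> 2 * E + 27/8 * (E * (Y * Z))" using GF by (simp add: algebra_simps)
    have w2: "E * Y * Z * ?Q \<ge> 3 * (E * (Y * Z))" using EYZQ by (simp add: algebra_simps)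
    have w3: "E * Y * Z = E * (Y * Z)" by simp
    show ?thesis using w1 w2 w3 YZ E0 by linarith
  qed
  show ?thesis
    unfolding goal_idx G_def[symmetric] T_def[symmetric] Y_def[symmetric] Z_def[symmetric]
    using fin Dlow th2 unfolding F_def by (simp add: mult.assoc ai)
qed

end
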